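(* For every integer $j\ge0$, in $\mathbb{Z}[q,q^{-1}][[y]]$, \[ (-1)^jq^{-\binom{j+1}{2}}y^{-j}\sum_{i\ge j}(-1)^iq^{\binom{i+1}{2}}\begin{bmatrix} i\\ j\end{bmatrix}y^i\prod_{r=1}^{i+1}\frac{1}{1-q^{r+j}y}=1. \]
   Context: $[m]=1+q+\dots+q^{m-1}$, $[m]!=\prod_{s=1}^m[s]$, and $\begin{bmatrix} i\\ j\end{bmatrix}=\frac{[i]!}{[j]![i-j]!}$ is the Gaussian binomial coefficient. Note $y^{-j}y^i=y^{i-j}$ with $i\ge j$, so each summand is a power series in $y$, and the sum converges $y$-adically. *)

theory Defs
  imports "HOL-Computational_Algebra.Formal_Power_Series"
          "HOL-Computational_Algebra.Formal_Laurent_Series"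
begin

text \<open>q-integers, q-factorials and Gaussian binomial coefficients, with q := fls_X,
  computed in the Laurent series field over the rationals (containing Z[q,q^-1]).\<close>

definition qint :: "nat \<Rightarrow> rat fls" where
  "qint m = (\<Sum>k<m. fls_X ^ k)"

definition qfact :: "nat \<Rightarrow> rat fls" where
  "qfact m = (\<Prod>s=1..m. qint s)"

definition qbinom :: "nat \<Rightarrow> nat \<Rightarrow> rat fls" where
  "qbinom i j = qfact i / (qfact j * qfact (i - j))"

end

theory Submission
  imports Defs
begin

lemma qint_add: "qint (a + b) = qint a + fls_X ^ a * qint b"
proof (induction b)
  case 0 then show ?case by (simp add: qint_def)
next
  case (Suc b) then show ?case by (simp add: qint_def algebra_simps power_add)
qed

lemma qint_nz: "qint (Suc n) \<noteq> 0"
proof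
  assume "qint (Suc n) = 0"
  then have "fls_nth (qint (Suc n)) 0 = 0" by simp
  moreover have "fls_nth (qint (Suc n)) 0 = 1"
    unfolding qint_def fls_nth_sum by (simp add: sum.delta)
  ultimately show False by simp
qed

lemma qfact_Suc: "qfact (Suc n) = qfact n * qint (Suc n)"
  by (simp add: qfact_def)

lemma qfact_0: "qfact 0 = 1"
  by (simp add: qfact_def)

lemma qfact_nz: "qfact n \<noteq> 0"
  by (induction n) (auto simp: qfact_0 qfact_Suc qint_nz simp del: qint_def)

definition qb :: "nat \<Rightarrow> nat \<Rightarrow> rat fls" where
  "qb n k = (if k \<le> n then qbinom n k else 0)"

lemma qb_0: "qb n 0 = 1"
  by (simp add: qb_def qbinom_def qfact_nz qfact_0)

lemma qb_nn: "qb n n = 1"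
  by (simp add: qb_def qbinom_def qfact_nz qfact_0)

lemma qb_gt: "n < k \<Longrightarrow> qb n k = 0"
  by (simp add: qb_def)

lemma qb_sym: "k \<le> n \<Longrightarrow> qb n (n - k) = qb n k"
  by (simp add: qb_def qbinom_def mult.commute)

lemma pascal_aux:
  "qb (Suc (k + 1 + d)) (Suc k) = qb (k + 1 + d) k + fls_X ^ Suc k * qb (k + 1 + d) (Suc k)
   \<and> qb (Suc (k + 1 + d)) (Suc k) = qb (k + 1 + d) (Suc k) + fls_X ^ (d + 1) * qb (k + 1 + d) k"
proof -
  have e1: "qint (k + d + 2) = qint (k+1) + fls_X ^ (k+1) * qint (d+1)"
    using qint_add[of "k+1" "d+1"] by (simp add: add_ac)
  have e2: "qint (k + d + 2) = qint (d+1) + fls_X ^ (d+1) * qint (k+1)"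
    using qint_add[of "d+1" "k+1"] by (simp add: add_ac)
  have f1: "qfact (Suc (k + 1 + d)) = qfact (k+1+d) * (qint (k+1) + fls_X ^ (k+1) * qint (d+1))"
    by (simp add: qfact_Suc e1[simplified])
  have f1': "qfact (Suc (k + 1 + d)) = qfact (k+1+d) * (qint (d+1) + fls_X ^ (d+1) * qint (k+1))"
    by (simp add: qfact_Suc e2[simplified])
  have f2: "qfact (k+1+d - k) = qfact d * qint (d+1)"
    by (simp add: qfact_Suc)
  have f3: "qfact (Suc (k + 1 + d) - Suc k) = qfact d * qint (d+1)"
    by (simp add: qfact_Suc)
  have f4: "qfact (Suc k) = qfact k * qint (k+1)" by (simp add: qfact_Suc)
  have f5: "qfact (k + 1 + d - Suc k) = qfact d" by simp
  have nz: "qfact k \<noteq> 0" "qfact d \<noteq> 0" "qint (k+1) \<noteq> 0" "qint (d+1) \<noteq> 0" "qfact (k+1+d) \<noteq> 0"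
    using qfact_nz qint_nz by auto
  have le: "k \<le> k + 1 + d" "Suc k \<le> k + 1 + d" "Suc k \<le> Suc (k + 1 + d)" by auto
  show ?thesis
  proof
    show "qb (Suc (k + 1 + d)) (Suc k) = qb (k + 1 + d) k + fls_X ^ Suc k * qb (k + 1 + d) (Suc k)"
      unfolding qb_def qbinom_def using nz
      apply (simp only: f1 f2 f3 f4 f5 if_True le)
      by (simp add: field_simps)
    show "qb (Suc (k + 1 + d)) (Suc k) = qb (k + 1 + d) (Suc k) + fls_X ^ (d + 1) * qb (k + 1 + d) k"
      unfolding qb_def qbinom_def using nz
      apply (simp only: f1' f2 f3 f4 f5 if_True le)
      by (simp add: field_simps)
  qed
qed


lemma pascal1: "qb (Suc n) (Suc k) = qb n k + fls_X ^ Suc k * qb n (Suc k)"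
proof (cases "Suc k \<le> n")
  case True
  then obtain d where "n = k + 1 + d" by (metis Suc_eq_plus1 le_iff_add)
  then show ?thesis using pascal_aux[of k d] by simp
next
  case False
  then have "k = n \<or> n < k" by auto
  then show ?thesis
    by (auto simp: qb_nn qb_gt)
qed

lemma pascal2: "qb (Suc n) (Suc k) = qb n (Suc k) + fls_X ^ (n - k) * qb n k"
proof (cases "Suc k \<le> n")
  case True
  then obtain d where nn: "n = k + 1 + d" by (metis Suc_eq_plus1 le_iff_add)
  have nk: "k + 1 + d - k = d + 1" by simp
  show ?thesis unfolding nn nk using pascal_aux[of k d] by blast
next
  case False
  then have "k = n \<or> n < k" by auto
  then show ?thesis
    by (auto simp: qb_nn qb_gt)
qed

lemma ch2: "Suc n choose 2 = (n choose 2) + n"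
  by (simp add: numeral_2_eq_2)

lemma ch_sum: "(j + k + 1) choose 2 = ((j+1) choose 2) + ((k+1) choose 2) + j*k"
  by (induction k) (simp_all add: ch2 algebra_simps)

lemma mult_LL_nth:
  fixes A :: "'a::comm_ring_1 fps"
  shows "(A * (1 - fps_const a * fps_X)) $ k = A $ k - (if k = 0 then 0 else a * A $ (k - 1))"
proof -
  have "A * (1 - fps_const a * fps_X) = A - fps_const a * (fps_X * A)" by (simp add: algebra_simps)
  then show ?thesis by simp
qed

definition LL :: "nat \<Rightarrow> nat \<Rightarrow> rat fls fps" where
  "LL j r = 1 - fps_const (fls_X ^ (r + j)) * fps_X"

definition PP :: "nat \<Rightarrow> nat \<Rightarrow> rat fls fps" where
  "PP j m = (\<Prod>r=1..m. inverse (LL j r))"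

definition GG :: "nat \<Rightarrow> nat \<Rightarrow> rat fls fps" where
  "GG j m = Abs_fps (\<lambda>k. if k \<le> j then (-1) ^ k * fls_X ^ ((m + k + 1) choose 2) * qb m (j - k) else 0)"

lemma LL_nth0: "LL j r $ 0 = 1"
  by (simp add: LL_def)

lemma PP_Suc: "PP j (Suc m) * LL j (Suc m) = PP j m"
  by (simp add: PP_def mult.assoc inverse_mult_eq_1 LL_nth0)

lemma PP_prod: "PP j m * (\<Prod>r=1..m. LL j r) = 1"
  by (simp add: PP_def prod.distrib[symmetric] inverse_mult_eq_1 LL_nth0)

lemma prod_LL: "(\<Prod>r=1..m. LL j r) = Abs_fps (\<lambda>k. (-1) ^ k * fls_X ^ (((k + 1) choose 2) + j * k) * qb m k)"
proof (induction m)
  case 0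
  show ?case
  proof (rule fps_ext)
    fix k show "(\<Prod>r=1..0. LL j r) $ k = Abs_fps (\<lambda>k. (-1) ^ k * fls_X ^ (((k + 1) choose 2) + j * k) * qb 0 k) $ k"
      by (cases k) (simp_all add: qb_0 qb_gt numeral_2_eq_2)
  qed
next
  case (Suc m)
  have e: "(\<Prod>r=1..Suc m. LL j r) = (\<Prod>r=1..m. LL j r) * LL j (Suc m)" by simp
  show ?case
  proof (rule fps_ext)
    fix k
    show "(\<Prod>r=1..Suc m. LL j r) $ k = Abs_fps (\<lambda>k. (-1) ^ k * fls_X ^ (((k + 1) choose 2) + j * k) * qb (Suc m) k) $ k"
    proof (cases k)
      case 0 then show ?thesis unfolding e Suc.IH LL_def[of j "Suc m"] mult_LL_nth by (simp add: qb_0 numeral_2_eq_2)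
    next
      case (Suc k')
      have ex: "fls_X ^ (Suc m + j) * fls_X ^ (((k' + 1) choose 2) + j * k') * qb m k'
          = fls_X ^ (((Suc k' + 1) choose 2) + j * Suc k') * (fls_X ^ (m - k') * qb m k')"
      proof (cases "k' \<le> m")
        case True
        have eq: "Suc m + j + (((k' + 1) choose 2) + j * k') = ((Suc k' + 1) choose 2) + j * Suc k' + (m - k')"
          using True by (simp add: ch2)
        have "fls_X ^ (Suc m + j) * fls_X ^ (((k' + 1) choose 2) + j * k') = (fls_X::rat fls) ^ (((Suc k' + 1) choose 2) + j * Suc k') * fls_X ^ (m - k')"
          by (simp only: power_add[symmetric] eq)
        then show ?thesis by (metis mult.assoc)
      next
        case False then show ?thesis by (simp add: qb_gt)
      qed
      show ?thesis unfolding e Suc.IH LL_def[of j "Suc m"] mult_LL_nth using Suc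
        apply (simp add: pascal2 algebra_simps)
        using ex apply (simp add: algebra_simps) by metis
    qed
  qed
qed


lemma GG_nth: "GG j m $ k = (if k \<le> j then (-1) ^ k * fls_X ^ ((m + k + 1) choose 2) * qb m (j - k) else 0)"
  by (simp add: GG_def)

lemma GG_base: "GG j j = fps_const (fls_X ^ ((j+1) choose 2)) * (\<Prod>r=1..j. LL j r)"
proof (rule fps_ext)
  fix k
  show "GG j j $ k = (fps_const (fls_X ^ ((j+1) choose 2)) * (\<Prod>r=1..j. LL j r)) $ k"
  proof (cases "k \<le> j")
    case True
    have "(j + k + 1) choose 2 = ((j+1) choose 2) + (((k + 1) choose 2) + j * k)"
      using ch_sum[of j k] by simp
    then show ?thesis using True unfolding prod_LL GG_nth
      by (simp add: qb_sym power_add)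
  next
    case False
    then show ?thesis unfolding prod_LL GG_nth by (simp add: qb_gt)
  qed
qed

lemma ring_aux:
  fixes x :: "'a::comm_ring_1"
  assumes "x * A * B = C * D"
  shows "- (s * C * a) - x * A * (s * B * b) = - (s * C * (a + D * b))"
proof -
  have "x * A * (s * B * b) = s * b * (x * A * B)" by (simp add: ac_simps)
  also have "\<dots> = s * b * (C * D)" using assms by simp
  finally show ?thesis by (simp add: algebra_simps)
qed

lemma GG_step: "GG j m * LL j (Suc m) - fps_const (fls_X ^ ((m+1) choose 2) * qb m j) = - (fps_X * GG j (Suc m))"
proof (rule fps_ext)
  fix k
  show "(GG j m * LL j (Suc m) - fps_const (fls_X ^ ((m+1) choose 2) * qb m j)) $ k = (- (fps_X * GG j (Suc m))) $ k"
  proof (cases k)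
    case 0
    then show ?thesis unfolding LL_def fps_sub_nth mult_LL_nth GG_nth by simp
  next
    case (Suc k')
    consider "k' < j" | "k' = j" | "j < k'" by linarith
    then show ?thesis
    proof cases
      case 1
      have pas: "qb (Suc m) (j - k') = qb m (j - Suc k') + fls_X ^ (j - k') * qb m (j - k')"
        using pascal1[of m "j - Suc k'"] 1 by (simp add: Suc_diff_Suc)
      have eq: "Suc (m + j) + (Suc (m + k') choose 2) = (Suc (Suc (m + k')) choose 2) + (j - k')"
        using 1 by (simp add: ch2)
      have ex: "fls_X * fls_X ^ (m + j) * fls_X ^ (Suc (m + k') choose 2) = (fls_X::rat fls) ^ (Suc (Suc (m + k')) choose 2) * fls_X ^ (j - k')"
        by (simp only: power_Suc[symmetric] power_add[symmetric] eq)
      have e2: "m + Suc k' + 1 = Suc m + k' + 1" by simp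
      show ?thesis unfolding LL_def fps_sub_nth mult_LL_nth GG_nth fps_X_mult_nth fps_neg_nth
        using Suc 1 apply (simp add: e2)
        apply (subst pas)
        by (rule ring_aux[OF ex])
    next
      case 2
      have eq: "Suc m + j + ((m + j + 1) choose 2) = ((Suc m + j + 1) choose 2)"
        by (simp add: ch2)
      have ex: "fls_X ^ (Suc m + j) * fls_X ^ ((m + j + 1) choose 2) = (fls_X::rat fls) ^ ((Suc m + j + 1) choose 2)"
        by (simp only: power_add[symmetric] eq)
      show ?thesis unfolding LL_def fps_sub_nth mult_LL_nth GG_nth fps_X_mult_nth fps_neg_nth
        using Suc 2 ex by (simp add: qb_0 algebra_simps)
    next
      case 3
      show ?thesis unfolding LL_def fps_sub_nth mult_LL_nth GG_nth fps_X_mult_nth fps_neg_nth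
        using Suc 3 by simp
    qed
  qed
qed


definition RR :: "nat \<Rightarrow> nat \<Rightarrow> rat fls fps" where
  "RR j n = fps_const ((-1) ^ (n + j)) * fps_X ^ n * (PP j (n + j) * GG j (n + j))"

lemma tele:
  fixes j :: nat
  defines "t \<equiv> (\<lambda>i::nat. fps_const ((-1) ^ i * fls_X ^ ((i + 1) choose 2) * qbinom i j)
                  * fps_X ^ (i - j)
                  * (\<Prod>r=1..i+1. inverse (1 - fps_const (fls_X ^ (r + j)) * fps_X)))"
  shows "fps_const ((-1) ^ j * fls_X ^ ((j + 1) choose 2)) - (\<Sum>i<n. t (i + j)) = RR j n"
proof (induction n)
  case 0
  have "RR j 0 = fps_const ((-1) ^ j) * (PP j j * GG j j)" by (simp add: RR_def)
  also have "\<dots> = fps_const ((-1) ^ j) * fps_const (fls_X ^ ((j+1) choose 2)) * (PP j j * (\<Prod>r=1..j. LL j r))"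
    unfolding GG_base by (simp only: ac_simps)
  also have "\<dots> = fps_const ((-1) ^ j * fls_X ^ ((j + 1) choose 2))"
    by (simp only: PP_prod mult_1_right fps_const_mult)
  finally show ?case by simp
next
  case (Suc n)
  define m where "m = n + j"
  define c where "c = fps_const ((-1) ^ m :: rat fls)"
  have tm: "t (n + j) = c * fps_const (fls_X ^ ((m + 1) choose 2) * qb m j) * fps_X ^ n * PP j (Suc m)"
    unfolding t_def c_def m_def PP_def LL_def qb_def by (simp add: ac_simps)
  have Rn: "RR j n = c * fps_X ^ n * (PP j (Suc m) * LL j (Suc m) * GG j m)"
    unfolding RR_def c_def PP_Suc m_def by simp
  have RSn: "RR j (Suc n) = - c * fps_X ^ n * PP j (Suc m) * (fps_X * GG j (Suc m))"
    unfolding RR_def c_def m_def by (simp add: ac_simps)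
  have "RR j n - t (n + j) = c * fps_X ^ n * PP j (Suc m) *
      (GG j m * LL j (Suc m) - fps_const (fls_X ^ ((m+1) choose 2) * qb m j))"
    unfolding Rn tm by (simp add: algebra_simps)
  also have "\<dots> = RR j (Suc n)"
    unfolding GG_step RSn by simp
  finally have "RR j n - t (n + j) = RR j (Suc n)" .
  then show ?case using Suc.IH by (simp add: algebra_simps)
qed

lemma dist_bound:
  fixes a b :: "'a::comm_ring_1 fps"
  assumes "a - b = fps_X ^ n * h"
  shows "dist a b \<le> (1/2) ^ n"
proof (cases "a = b")
  case True then show ?thesis by simp
next
  case False
  then have "a - b \<noteq> 0" by simp
  then have "subdegree (a - b) \<ge> n"
    by (rule subdegree_geI) (simp add: assms fps_X_power_mult_nth)
  then have "(2::real) ^ n \<le> 2 ^ subdegree (a - b)" by (rule power_increasing) simp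
  then show ?thesis using False by (simp add: dist_fps_def power_one_over field_simps)
qed


theorem mainTheorem7:
  fixes j :: nat
  defines "q \<equiv> (fls_X :: rat fls)"
  defines "y \<equiv> (fps_X :: rat fls fps)"
  defines "t \<equiv> (\<lambda>i::nat. fps_const ((-1) ^ i * q ^ ((i + 1) choose 2) * qbinom i j)
                  * y ^ (i - j)
                  * (\<Prod>r=1..i+1. inverse (1 - fps_const (q ^ (r + j)) * y)))"
  shows "summable (\<lambda>n. t (n + j)) \<and>
         fps_const ((-1) ^ j * fls_X_intpow (- int ((j + 1) choose 2))) * (\<Sum>n. t (n + j)) = 1"
proof -
  define T where "T = fps_const ((-1) ^ j * fls_X ^ ((j + 1) choose 2) :: rat fls)"
  have tel: "T - (\<Sum>i<n. t (i + j)) = RR j n" for n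
    unfolding T_def t_def q_def y_def by (rule tele)
  have db: "dist (\<Sum>i<n. t (i + j)) T \<le> (1/2) ^ n" for n
  proof -
    have "T - (\<Sum>i<n. t (i + j)) = fps_X ^ n * (fps_const ((-1) ^ (n + j)) * (PP j (n + j) * GG j (n + j)))"
      unfolding tel RR_def by (simp add: ac_simps)
    then have "dist T (\<Sum>i<n. t (i + j)) \<le> (1/2) ^ n" by (rule dist_bound)
    then show ?thesis by (simp add: dist_commute)
  qed
  have lim: "(\<lambda>n. \<Sum>i<n. t (i + j)) \<longlonglongrightarrow> T"
  proof (rule tendsto_dist_iff[THEN iffD2])
    show "(\<lambda>n. dist (\<Sum>i<n. t (i + j)) T) \<longlonglongrightarrow> 0"
    proof (rule tendsto_sandwich[of "\<lambda>_. 0" _ _ "\<lambda>n. (1/2::real) ^ n"])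
      show "\<forall>\<^sub>F n in sequentially. (0::real) \<le> dist (\<Sum>i<n. t (i + j)) T" by simp
      show "\<forall>\<^sub>F n in sequentially. dist (\<Sum>i<n. t (i + j)) T \<le> (1/2) ^ n"
        using db by simp
      show "(\<lambda>n. (1/2::real) ^ n) \<longlonglongrightarrow> 0"
        by (rule LIMSEQ_realpow_zero) auto
    qed simp
  qed
  then have sm: "(\<lambda>n. t (n + j)) sums T" by (simp add: sums_def)
  have "fls_X_intpow (- int ((j + 1) choose 2)) * fls_X ^ ((j + 1) choose 2) = (1 :: rat fls)"
  proof -
    have e: "fls_X ^ ((j + 1) choose 2) = (fls_X_intpow (int ((j + 1) choose 2)) :: rat fls)"
      by (simp add: fls_X_power_conv_shift_1)
    show ?thesis unfolding e
      using fls_X_intpow_times_fls_X_intpow[of "- int ((j + 1) choose 2)" "int ((j + 1) choose 2)", where 'a=rat]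
      by simp
  qed
  then have c1: "((-1) ^ j * fls_X_intpow (- int ((j + 1) choose 2))) * ((-1) ^ j * fls_X ^ ((j + 1) choose 2)) = (1 :: rat fls)"
    by (simp add: algebra_simps flip: power_mult_distrib)
  show ?thesis
  proof
    show "summable (\<lambda>n. t (n + j))" using sm by (rule sums_summable)
    have "(\<Sum>n. t (n + j)) = T" using sm by (rule sums_unique[symmetric])
    then show "fps_const ((-1) ^ j * fls_X_intpow (- int ((j + 1) choose 2))) * (\<Sum>n. t (n + j)) = 1"
      unfolding T_def by (simp only: fps_const_mult c1 fps_const_1_eq_1)
  qed
qed

end
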